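(* For $n\ge2$, with $\widetilde Q_n$, $\lambda_\pm$, the double suspension $\Sigma^2$ and $\iota\colon\Sigma^2\widetilde Q_n\to\widetilde Q_{n+1}$ as in the context, the homomorphism $\iota_*\circ\Sigma^2\colon\pi_{2n-1}(\widetilde Q_n)\to\pi_{2n+1}(\widetilde Q_{n+1})$ maps $\lambda_+\mapsto\lambda_+$ and $\lambda_-\mapsto\lambda_-$.
   Context: $\widetilde Q_n=\{(a,b)\in\mathbb R^{2n}\oplus\mathbb R^{2n}: |a|=|b|=1,\ \langle a,b\rangle=0\}$ (simply connected). For a subspace $S\subset V$ of a real vector space, $\Sigma^2S=\{(\sqrt{1-|X|^2}\,v,X): v\in S, X\in\mathbb R^2, |X|\le1\}\subset V\oplus\mathbb R^2$; in particular $\Sigma^2S^{2n-1}=S^{2n+1}\subset\mathbb R^{2n+2}$, and for $f\colon S^{2n-1}\to S$ one sets $\Sigma^2f(\sqrt{1-|X|^2}u,X)=(\sqrt{1-|X|^2}f(u),X)$, defining $\Sigma^2\colon\pi_{2n-1}(S)\to\pi_{2n+1}(\Sigma^2S)$. Let $j_+$ be the orientation-compatible orthogonal complex structure on $\mathbb R^2$, and define $\iota\colon\Sigma^2\widetilde Q_n\to\widetilde Q_{n+1}$ by $(\sqrt{1-|X|^2}(a,b),X)\mapsto\big((\sqrt{1-|X|^2}a,X),(\sqrt{1-|X|^2}b,-j_+X)\big)$. Spheres $S^{m}\subset\mathbb R^{m+1}$ carry the standard boundary orientation. $\lambda_+\in\pi_{2n-1}(\widetilde Q_n)$ is the class of $a\mapsto(a,-J_+a)$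 for an orthogonal complex structure $J_+$ on $\mathbb R^{2n}$ compatible with the orientation, and $\lambda_-$ is minus the class of $a\mapsto(a,-J_-a)$ for an orthogonal complex structure $J_-$ compatible with the opposite orientation (both independent of the choice). *)

theory Defs
  imports "HOL-Analysis.Analysis"
begin

text \<open>Vectors of R^m are encoded as functions nat => real vanishing at indices >= m
  (the product topology on nat => real restricts to the Euclidean topology there).
  Linear maps on R^m are encoded as matrices nat => nat => real (entries with indices < m).\<close>

type_synonym vec = "nat \<Rightarrow> real"

definition Rn :: "nat \<Rightarrow> vec set" where
  "Rn m = {x. \<forall>i\<ge>m. x i = 0}"

definition ip :: "nat \<Rightarrow> vec \<Rightarrow> vec \<Rightarrow> real" where
  "ip m x y = (\<Sum>i<m. x i * y i)"

definition Sph :: "nat \<Rightarrow> vec set" where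
  "Sph m = {x \<in> Rn m. ip m x x = 1}"

definition Qt :: "nat \<Rightarrow> (vec \<times> vec) set" where
  "Qt n = {(a, b). a \<in> Sph (2*n) \<and> b \<in> Sph (2*n) \<and> ip (2*n) a b = 0}"

definition mv :: "nat \<Rightarrow> (nat \<Rightarrow> nat \<Rightarrow> real) \<Rightarrow> vec \<Rightarrow> vec" where
  "mv m A x = (\<lambda>i. if i < m then (\<Sum>j<m. A i j * x j) else 0)"

definition ocs :: "nat \<Rightarrow> (nat \<Rightarrow> nat \<Rightarrow> real) \<Rightarrow> bool" where
  "ocs m J \<longleftrightarrow>
     (\<forall>i<m. \<forall>j<m. (\<Sum>k<m. J i k * J k j) = (if i = j then -1 else 0)) \<and>
     (\<forall>i<m. \<forall>j<m. (\<Sum>k<m. J k i * J k j) = (if i = j then 1 else 0))"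

definition detm :: "nat \<Rightarrow> (nat \<Rightarrow> nat \<Rightarrow> real) \<Rightarrow> real" where
  "detm m A = (\<Sum>p\<in>{p. p permutes {..<m}}. of_int (sign p) * (\<Prod>i<m. A i (p i)))"

definition cbasis_mat :: "nat \<Rightarrow> (nat \<Rightarrow> nat \<Rightarrow> real) \<Rightarrow> (nat \<Rightarrow> vec) \<Rightarrow> (nat \<Rightarrow> nat \<Rightarrow> real)" where
  "cbasis_mat m J w = (\<lambda>i k. (if even k then w (k div 2) else mv m J (w (k div 2))) i)"

text \<open>J compatible with the standard orientation of R^m: some basis of the form
  (w_1, J w_1, ..., w_k, J w_k) is positively oriented; compatible with the opposite
  orientation: some such basis is negatively oriented.\<close>
definition pos_compat :: "nat \<Rightarrow> (nat \<Rightarrow> nat \<Rightarrow> real) \<Rightarrow> bool" where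
  "pos_compat m J \<longleftrightarrow> (\<exists>w. detm m (cbasis_mat m J w) > 0)"

definition neg_compat :: "nat \<Rightarrow> (nat \<Rightarrow> nat \<Rightarrow> real) \<Rightarrow> bool" where
  "neg_compat m J \<longleftrightarrow> (\<exists>w. detm m (cbasis_mat m J w) < 0)"

definition lam :: "nat \<Rightarrow> (nat \<Rightarrow> nat \<Rightarrow> real) \<Rightarrow> vec \<Rightarrow> vec \<times> vec" where
  "lam n J a = (a, (\<lambda>i. - mv (2*n) J a i))"

text \<open>Reflection in the first coordinate (a degree -1 self-map of every sphere);
  precomposition with it represents the negative of a homotopy class.\<close>
definition refl0 :: "vec \<Rightarrow> vec" where
  "refl0 x = x(0 := - x 0)"

text \<open>Double suspension of f : S^(2n-1) -> Q~_n \<subseteq> R^(2n) (+) R^(2n), as a map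
  S^(2n+1) -> (R^(2n) (+) R^(2n)) (+) R^2, where R^(2n+2) = R^(2n) (+) R^2 with the
  R^2 coordinates at indices 2n, 2n+1.  A point y of S^(2n+1) is (s u, X) with
  X = (y_2n, y_(2n+1)), s = sqrt(1-|X|^2).  (If s = 0 the value is ((0,0),X).)\<close>
definition sigma2 :: "nat \<Rightarrow> (vec \<Rightarrow> vec \<times> vec) \<Rightarrow> vec \<Rightarrow> (vec \<times> vec) \<times> (real \<times> real)" where
  "sigma2 n f y =
     (let X1 = y (2*n); X2 = y (2*n+1); s = sqrt (1 - X1\<^sup>2 - X2\<^sup>2);
          u = (\<lambda>i. if i < 2*n then y i / s else 0)
      in (((\<lambda>i. s * fst (f u) i), (\<lambda>i. s * snd (f u) i)), (X1, X2)))"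

definition emb :: "nat \<Rightarrow> vec \<Rightarrow> real \<Rightarrow> real \<Rightarrow> vec" where
  "emb n v a b = (\<lambda>i. if i < 2*n then v i else if i = 2*n then a
                        else if i = 2*n+1 then b else 0)"

text \<open>iota : Sigma^2 Q~_n -> Q~_(n+1), ((p,q),X) |-> ((p,X),(q,-j_+ X)), where
  j_+(X1,X2) = (-X2,X1), so -j_+ X = (X2,-X1).\<close>
definition iota :: "nat \<Rightarrow> (vec \<times> vec) \<times> (real \<times> real) \<Rightarrow> vec \<times> vec" where
  "iota n z = (case z of ((p, q), (X1, X2)) \<Rightarrow> (emb n p X1 X2, emb n q X2 (- X1)))"

end

theory Submission
  imports Defs "Jordan_Normal_Form.Determinant"
begin


type_synonym mt = "nat \<Rightarrow> nat \<Rightarrow> real"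

definition Idm :: "nat \<Rightarrow> mt" where "Idm N = (\<lambda>i j. if i < N \<and> i = j then 1 else 0)"
definition tr :: "mt \<Rightarrow> mt" where "tr A = (\<lambda>i j. A j i)"
definition NS :: "nat \<Rightarrow> mt set" where "NS N = {A. detm N A \<noteq> 0}"
definition addr :: "real \<Rightarrow> nat \<Rightarrow> nat \<Rightarrow> mt \<Rightarrow> mt" where
  "addr c k l A = (\<lambda>i j. if i = k then A i j + c * A l j else A i j)"
definition multr :: "nat \<Rightarrow> real \<Rightarrow> mt \<Rightarrow> mt" where
  "multr k c A = (\<lambda>i j. if i = k then c * A i j else A i j)"
definition tm :: "nat \<Rightarrow> mt \<Rightarrow> real mat" where
  "tm N A = mat N N (\<lambda>(i,j). A i j)"

lemma tm_carrier[simp]: "tm N A \<in> carrier_mat N N" by (simp add: tm_def)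

lemma detm_tm: "detm N A = Determinant.det (tm N A)"
  unfolding detm_def Determinant.det_def tm_def by (simp add: atLeast0LessThan)

lemma tm_cong: "(\<And>i j. i < N \<Longrightarrow> j < N \<Longrightarrow> A i j = B i j) \<Longrightarrow> tm N A = tm N B"
  by (auto simp: tm_def)

lemma detm_cong: assumes "\<And>i j. i < N \<Longrightarrow> j < N \<Longrightarrow> A i j = B i j" shows "detm N A = detm N B"
proof -
  have "tm N A = tm N B" by (rule tm_cong) (rule assms)
  then show ?thesis by (simp add: detm_tm)
qed

lemma detm_tr: "detm N (tr A) = detm N A"
proof -
  have "tm N (tr A) = transpose_mat (tm N A)" by (rule eq_matI) (auto simp: tm_def tr_def)
  then have "detm N (tr A) = Determinant.det (transpose_mat (tm N A))" by (simp add: detm_tm)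
  also have "\<dots> = Determinant.det (tm N A)" by (rule det_transpose[OF tm_carrier])
  finally show ?thesis by (simp add: detm_tm)
qed

lemma detm_Idm: "detm N (Idm N) = 1"
proof -
  have "tm N (Idm N) = 1\<^sub>m N" by (rule eq_matI) (auto simp: tm_def Idm_def)
  then show ?thesis by (simp add: detm_tm)
qed

lemma detm_addr: assumes "k < N" "l < N" "k \<noteq> l" shows "detm N (addr c k l A) = detm N A"
proof -
  have "tm N (addr c k l A) = addrow c k l (tm N A)"
    by (rule eq_matI) (use assms in \<open>auto simp: tm_def addr_def\<close>)
  then show ?thesis using assms det_addrow[of l N k "tm N A" c] by (simp add: detm_tm)
qed

lemma detm_multr: assumes "k < N" shows "detm N (multr k c A) = c * detm N A"
proof -
  have "tm N (multr k c A) = multrow k c (tm N A)"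
    by (rule eq_matI) (use assms in \<open>auto simp: tm_def multr_def\<close>)
  then show ?thesis using assms det_multrow[of k N "tm N A" c] by (simp add: detm_tm)
qed

lemma mv_cong: "(\<And>j. j < N \<Longrightarrow> x j = y j) \<Longrightarrow> mv N A x = mv N A y"
  unfolding mv_def by (intro ext) auto

lemma mv_Rn[simp]: "mv N A x \<in> Rn N" by (simp add: mv_def Rn_def)

lemma detm_zero_iff: "detm N A = 0 \<longleftrightarrow> (\<exists>x. x \<in> Rn N \<and> x \<noteq> (\<lambda>_. 0) \<and> mv N A x = (\<lambda>_. 0))"
proof -
  have key: "(tm N A *\<^sub>v vec N x) = vec N (mv N A x)" for x
  proof
    show "dim_vec (tm N A *\<^sub>v vec N x) = dim_vec (vec N (mv N A x))" by (simp add: tm_def)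
    fix i assume "i < dim_vec (vec N (mv N A x))"
    then have i: "i < N" by simp
    show "(tm N A *\<^sub>v vec N x) $ i = vec N (mv N A x) $ i"
      using i by (simp add: tm_def mv_def scalar_prod_def row_def lessThan_atLeast0)
  qed
  show ?thesis
  proof
    assume "detm N A = 0"
    then have "Determinant.det (tm N A) = 0" by (simp only: detm_tm)
    then have "\<exists>v. v \<in> carrier_vec N \<and> v \<noteq> 0\<^sub>v N \<and> tm N A *\<^sub>v v = 0\<^sub>v N"
      by (simp only: det_0_iff_vec_prod_zero[OF tm_carrier])
    then obtain v where v: "v \<in> carrier_vec N" "v \<noteq> 0\<^sub>v N" "tm N A *\<^sub>v v = 0\<^sub>v N"
      by blast
    define x where "x = (\<lambda>i. if i < N then v $ i else 0)"
    have vx: "v = vec N x" using v(1) unfolding x_def by (intro eq_vecI) auto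
    have "x \<in> Rn N" by (auto simp: Rn_def x_def)
    moreover have "x \<noteq> (\<lambda>_. 0)"
    proof
      assume "x = (\<lambda>_. 0)"
      then have "v = 0\<^sub>v N" using vx by auto
      then show False using v by simp
    qed
    moreover have "mv N A x = (\<lambda>_. 0)"
    proof
      fix i
      show "mv N A x i = 0"
      proof (cases "i < N")
        case True
        have "vec N (mv N A x) $ i = 0" using v(3) key[of x] vx True by simp
        then show ?thesis using True by simp
      qed (simp add: mv_def)
    qed
    ultimately show "\<exists>x. x \<in> Rn N \<and> x \<noteq> (\<lambda>_. 0) \<and> mv N A x = (\<lambda>_. 0)" by blast
  next
    assume "\<exists>x. x \<in> Rn N \<and> x \<noteq> (\<lambda>_. 0) \<and> mv N A x = (\<lambda>_. 0)"
    then obtain x where x: "x \<in> Rn N" "x \<noteq> (\<lambda>_. 0)" "mv N A x = (\<lambda>_. 0)" by blast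
    have "vec N x \<noteq> 0\<^sub>v N"
    proof
      assume h: "vec N x = 0\<^sub>v N"
      have "x = (\<lambda>_. 0)"
      proof
        fix i show "x i = 0"
        proof (cases "i < N")
          case True then show ?thesis using arg_cong[OF h, of "\<lambda>v. v $ i"] by simp
        qed (use x(1) in \<open>auto simp: Rn_def\<close>)
      qed
      then show False using x by simp
    qed
    moreover have "tm N A *\<^sub>v vec N x = 0\<^sub>v N" using key[of x] x(3) by auto
    moreover have "vec N x \<in> carrier_vec N" by simp
    ultimately have "\<exists>v. v \<in> carrier_vec N \<and> v \<noteq> 0\<^sub>v N \<and> tm N A *\<^sub>v v = 0\<^sub>v N" by blast
    then show "detm N A = 0"
      unfolding detm_tm by (simp only: det_0_iff_vec_prod_zero[OF tm_carrier])
  qed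
qed

lemma detm_inj: "detm N A \<noteq> 0 \<Longrightarrow> x \<in> Rn N \<Longrightarrow> mv N A x = (\<lambda>_. 0) \<Longrightarrow> x = (\<lambda>_. 0)"
proof (rule ccontr)
  assume "detm N A \<noteq> 0" "x \<in> Rn N" "mv N A x = (\<lambda>_. 0)" "x \<noteq> (\<lambda>_. 0)"
  then have "\<exists>x. x \<in> Rn N \<and> x \<noteq> (\<lambda>_. 0) \<and> mv N A x = (\<lambda>_. 0)" by blast
  then have "detm N A = 0" by (simp only: detm_zero_iff)
  then show False using \<open>detm N A \<noteq> 0\<close> by simp
qed


lemma sum_pairs: "(\<Sum>l<2*m. f l) = (\<Sum>p<m. f (2*p) + f (2*p+1))" for f :: "nat \<Rightarrow> real"
  by (induction m) (simp_all add: sum.distrib)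

definition J0v :: "nat \<Rightarrow> (nat \<Rightarrow> real) \<Rightarrow> nat \<Rightarrow> real" where
  "J0v N y = (\<lambda>l. if l < N then (if even l then - y (Suc l) else y (l - 1)) else 0)"

lemma J0v_Rn[simp]: "J0v N y \<in> Rn N" by (simp add: J0v_def Rn_def)

lemma ip_sym: "ip N x y = ip N y x" by (simp add: ip_def mult.commute)

lemma ip_lin2: "ip N x (\<lambda>i. a * y i + b * z i) = a * ip N x y + b * ip N x z"
  by (simp add: ip_def sum.distrib sum_distrib_left algebra_simps)

lemma ip_neg: "ip N x (\<lambda>i. - y i) = - ip N x y"
  by (simp add: ip_def sum_negf)

lemma ip_cong: "(\<And>i. i < N \<Longrightarrow> x i = x' i) \<Longrightarrow> (\<And>i. i < N \<Longrightarrow> y i = y' i) \<Longrightarrow> ip N x y = ip N x' y'"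
  by (simp add: ip_def)

lemma ip_self_nonneg: "ip N x x \<ge> 0"
  by (simp add: ip_def sum_nonneg)

lemma ip_self_zero: assumes "ip N x x = 0" "i < N" shows "x i = 0"
proof -
  have "\<forall>i\<in>{..<N}. x i * x i = 0"
    using assms(1) unfolding ip_def by (subst sum_nonneg_eq_0_iff[symmetric]) auto
  then show ?thesis using assms(2) by auto
qed

lemma Rn_ip_zero: assumes "x \<in> Rn N" "ip N x x = 0" shows "x = (\<lambda>_. 0)"
proof
  fix i show "x i = 0"
  proof (cases "i < N")
    case True then show ?thesis using ip_self_zero[OF assms(2)] by simp
  next
    case False then show ?thesis using assms(1) by (simp add: Rn_def)
  qed
qed

lemma mv_lin: "mv N A (\<lambda>i. a * x i + b * y i) = (\<lambda>i. a * mv N A x i + b * mv N A y i)"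
  by (rule ext) (simp add: mv_def sum.distrib sum_distrib_left algebra_simps)

lemma mv_neg: "mv N A (\<lambda>i. - x i) = (\<lambda>i. - mv N A x i)"
  by (rule ext) (simp add: mv_def sum_negf)

lemma ip_adj: "ip N x (mv N A y) = ip N (mv N (tr A) x) y"
proof -
  have "ip N x (mv N A y) = (\<Sum>i<N. \<Sum>j<N. x i * A i j * y j)"
    by (simp add: ip_def mv_def sum_distrib_left mult.assoc)
  also have "\<dots> = (\<Sum>j<N. \<Sum>i<N. x i * A i j * y j)" by (rule sum.swap)
  also have "\<dots> = ip N (mv N (tr A) x) y"
    by (simp add: ip_def mv_def tr_def sum_distrib_left mult_ac)
  finally show ?thesis .
qed

lemma ocs_isom: assumes "ocs N J" shows "ip N (mv N J x) (mv N J y) = ip N x y"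
proof -
  have o: "\<And>j l. j < N \<Longrightarrow> l < N \<Longrightarrow> (\<Sum>i<N. J i j * J i l) = (if j = l then 1 else 0)"
    using assms unfolding ocs_def by blast
  have "ip N (mv N J x) (mv N J y) = (\<Sum>i<N. \<Sum>j<N. \<Sum>l<N. J i j * x j * (J i l * y l))"
    by (simp add: ip_def mv_def sum_product)
  also have "\<dots> = (\<Sum>j<N. \<Sum>i<N. \<Sum>l<N. J i j * x j * (J i l * y l))" by (rule sum.swap)
  also have "\<dots> = (\<Sum>j<N. \<Sum>l<N. \<Sum>i<N. J i j * x j * (J i l * y l))"
    by (rule sum.cong[OF refl], rule sum.swap)
  also have "\<dots> = (\<Sum>j<N. \<Sum>l<N. x j * y l * (\<Sum>i<N. J i j * J i l))"
    by (simp add: sum_distrib_left mult_ac)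
  also have "\<dots> = (\<Sum>j<N. \<Sum>l<N. x j * y l * (if j = l then 1 else 0))"
    by (rule sum.cong[OF refl], rule sum.cong[OF refl]) (simp add: o)
  also have "\<dots> = ip N x y" by (simp add: ip_def if_distrib cong: if_cong)
  finally show ?thesis .
qed

lemma ocs_sq: assumes "ocs N J" shows "mv N J (mv N J x) = (\<lambda>i. if i < N then - x i else 0)"
proof
  fix i
  have o: "\<And>i l. i < N \<Longrightarrow> l < N \<Longrightarrow> (\<Sum>j<N. J i j * J j l) = (if i = l then -1 else 0)"
    using assms unfolding ocs_def by blast
  show "mv N J (mv N J x) i = (if i < N then - x i else 0)"
  proof (cases "i < N")
    case True
    have "mv N J (mv N J x) i = (\<Sum>j<N. \<Sum>l<N. J i j * J j l * x l)"
      using True by (simp add: mv_def sum_distrib_left mult.assoc)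
    also have "\<dots> = (\<Sum>l<N. \<Sum>j<N. J i j * J j l * x l)" by (rule sum.swap)
    also have "\<dots> = (\<Sum>l<N. (\<Sum>j<N. J i j * J j l) * x l)" by (simp add: sum_distrib_right)
    also have "\<dots> = (\<Sum>l<N. (if i = l then -1 else 0) * x l)"
      by (rule sum.cong[OF refl]) (simp add: o True)
    also have "\<dots> = (\<Sum>l<N. if i = l then - x l else 0)" by (rule sum.cong) auto
    also have "\<dots> = - x i" using True by (simp add: sum.delta)
    finally show ?thesis using True by simp
  qed (simp add: mv_def)
qed

lemma ocs_skew: assumes "ocs N J" shows "ip N x (mv N J x) = 0"
proof -
  have "ip N x (mv N J x) = ip N (mv N J x) (mv N J (mv N J x))" using ocs_isom[OF assms] by simp
  also have "\<dots> = ip N (mv N J x) (\<lambda>i. - x i)"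
    by (rule ip_cong) (simp_all add: ocs_sq[OF assms])
  also have "\<dots> = - ip N x (mv N J x)" by (simp add: ip_neg ip_sym)
  finally show ?thesis by simp
qed

lemma J0v_isom: assumes "N = 2*m" shows "ip N (J0v N y) (J0v N y) = ip N y y"
proof -
  have "ip N (J0v N y) (J0v N y) = (\<Sum>p<m. y (2*p+1) * y (2*p+1) + y (2*p) * y (2*p))"
    unfolding ip_def assms sum_pairs by (rule sum.cong) (auto simp: J0v_def)
  also have "\<dots> = ip N y y" unfolding ip_def assms sum_pairs by (simp add: add.commute)
  finally show ?thesis .
qed

lemma J0v_skew: assumes "N = 2*m" shows "ip N y (J0v N y) = 0"
proof -
  have "ip N y (J0v N y) = (\<Sum>p<m. y (2*p) * (- y (2*p+1)) + y (2*p+1) * y (2*p))"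
    unfolding ip_def assms sum_pairs by (rule sum.cong) (auto simp: J0v_def)
  also have "\<dots> = 0" by (simp add: mult.commute)
  finally show ?thesis .
qed

lemma intertwine:
  assumes N: "N = 2*m" and J: "ocs N J"
    and col: "\<And>p i. p < m \<Longrightarrow> i < N \<Longrightarrow> W i (2*p+1) = mv N J (\<lambda>j. W j (2*p)) i"
  shows "mv N W (J0v N y) = mv N J (mv N W y)"
proof
  fix i
  show "mv N W (J0v N y) i = mv N J (mv N W y) i"
  proof (cases "i < N")
    case True
    have c2: "(\<Sum>j<N. J i j * W j (Suc (2*p))) = - W i (2*p)" if p: "p < m" for p
    proof -
      have "(\<Sum>j<N. J i j * W j (Suc (2*p))) = (\<Sum>j<N. J i j * mv N J (\<lambda>j. W j (2*p)) j)"
        by (rule sum.cong[OF refl]) (use col[OF p] in simp)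
      also have "\<dots> = mv N J (mv N J (\<lambda>j. W j (2*p))) i"
        using True by (simp add: mv_def)
      also have "\<dots> = - W i (2*p)" using True by (simp add: ocs_sq[OF J])
      finally show ?thesis .
    qed
    have c1: "(\<Sum>j<N. J i j * W j (2*p)) = W i (Suc (2*p))" if p: "p < m" for p
      using col[OF p True] True by (simp add: mv_def)
    have "mv N W (J0v N y) i = (\<Sum>p<m. W i (2*p) * (- y (2*p+1)) + W i (2*p+1) * y (2*p))"
      using True unfolding mv_def N sum_pairs by (simp add: J0v_def)
    also have "\<dots> = (\<Sum>p<m. (\<Sum>j<N. J i j * W j (2*p)) * y (2*p) + (\<Sum>j<N. J i j * W j (2*p+1)) * y (2*p+1))"
      by (rule sum.cong[OF refl]) (simp add: c1 c2)
    also have "\<dots> = (\<Sum>k<N. (\<Sum>j<N. J i j * W j k) * y k)"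
      unfolding N sum_pairs ..
    also have "\<dots> = (\<Sum>k<N. \<Sum>j<N. J i j * W j k * y k)" by (simp add: sum_distrib_right)
    also have "\<dots> = (\<Sum>j<N. \<Sum>k<N. J i j * W j k * y k)" by (rule sum.swap)
    also have "\<dots> = mv N J (mv N W y) i"
      using True by (simp add: mv_def sum_distrib_left mult.assoc)
    finally show ?thesis .
  qed (simp add: mv_def)
qed

lemma cbasis_col:
  assumes "N = 2*m" "p < m" "i < N"
  shows "cbasis_mat N J w i (2*p+1) = mv N J (\<lambda>j. cbasis_mat N J w j (2*p)) i"
  by (simp add: cbasis_mat_def)


definition nrm :: "nat \<Rightarrow> (nat \<Rightarrow> real) \<Rightarrow> nat \<Rightarrow> real" where
  "nrm N v = (\<lambda>i. v i / sqrt (ip N v v))"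

lemma hom_intro:
  fixes h :: "real \<times> 'a::topological_space \<Rightarrow> 'b::topological_space"
  assumes "continuous_on ({0..1} \<times> S) h" "h ` ({0..1} \<times> S) \<subseteq> T"
    "\<And>x. x \<in> S \<Longrightarrow> h (0,x) = f x" "\<And>x. x \<in> S \<Longrightarrow> h (1,x) = g x"
  shows "homotopic_with_canon (\<lambda>_. True) S T f g"
proof -
  have e: "prod_topology (top_of_set {0..1::real}) (top_of_set S) = top_of_set ({0..1} \<times> S)"
    by (simp add: subtopology_Times[symmetric])
  show ?thesis
    apply (subst homotopic_with)
     apply simp
    apply (rule exI[of _ h])
    using assms by (auto simp: e)
qed

lemma cont_coord: "continuous_on S f \<Longrightarrow> continuous_on S (\<lambda>z. f z i)"
  by (rule continuous_on_product_then_coordinatewise)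

lemma cont_mv:
  assumes "\<And>i j. continuous_on S (\<lambda>z. A z i j)" "continuous_on S x"
  shows "continuous_on S (\<lambda>z. mv N (A z) (x z))"
proof (rule continuous_on_coordinatewise_then_product)
  fix i
  show "continuous_on S (\<lambda>z. mv N (A z) (x z) i)"
  proof (cases "i < N")
    case True
    have "continuous_on S (\<lambda>z. \<Sum>j<N. A z i j * x z j)"
      by (intro continuous_intros assms cont_coord[OF assms(2)])
    then show ?thesis using True by (simp add: mv_def)
  qed (simp add: mv_def)
qed

lemma cont_J0v:
  assumes "continuous_on S x"
  shows "continuous_on S (\<lambda>z. J0v N (x z))"
proof (rule continuous_on_coordinatewise_then_product)
  fix l
  have c: "continuous_on S (\<lambda>z. x z j)" for j by (rule cont_coord[OF assms])
  show "continuous_on S (\<lambda>z. J0v N (x z) l)"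
    by (cases "l < N"; cases "even l") (simp_all add: J0v_def c continuous_on_minus)
qed

lemma ip_div: "ip N x (\<lambda>i. y i / c) = ip N x y / c"
  by (simp add: ip_def sum_divide_distrib)

lemma nrm_Sph: assumes "v \<in> Rn N" "ip N v v > 0" shows "nrm N v \<in> Sph N"
proof -
  have "nrm N v \<in> Rn N" using assms(1) by (simp add: Rn_def nrm_def)
  moreover have "ip N (nrm N v) (nrm N v) = 1"
  proof -
    have "ip N (nrm N v) (nrm N v) = (\<Sum>i<N. v i * v i) / (sqrt (ip N v v) * sqrt (ip N v v))"
      by (simp add: ip_def nrm_def sum_divide_distrib)
    also have "\<dots> = ip N v v / ip N v v" using assms(2) by (simp add: ip_def)
    finally show ?thesis using assms(2) by simp
  qed
  ultimately show ?thesis by (simp add: Sph_def)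
qed

lemma field_hom:
  fixes F :: "real \<Rightarrow> (nat \<Rightarrow> real) \<Rightarrow> nat \<Rightarrow> real"
  assumes N: "N = 2*m"
    and cont: "continuous_on ({0..1} \<times> Sph N) (\<lambda>z. F (fst z) (snd z))"
    and rn: "\<And>t a. t \<in> {0..1} \<Longrightarrow> a \<in> Sph N \<Longrightarrow> F t a \<in> Rn N"
    and orth: "\<And>t a. t \<in> {0..1} \<Longrightarrow> a \<in> Sph N \<Longrightarrow> ip N a (F t a) = 0"
    and pos: "\<And>t a. t \<in> {0..1} \<Longrightarrow> a \<in> Sph N \<Longrightarrow> ip N (F t a) (F t a) > 0"
    and f: "\<And>a. a \<in> Sph N \<Longrightarrow> f a = (a, nrm N (F 0 a))"
    and g: "\<And>a. a \<in> Sph N \<Longrightarrow> g a = (a, nrm N (F 1 a))"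
  shows "homotopic_with_canon (\<lambda>_. True) (Sph N) (Qt m) f g"
proof (rule hom_intro[where h = "\<lambda>z. (snd z, nrm N (F (fst z) (snd z)))"])
  have cF: "continuous_on ({0..1} \<times> Sph N) (\<lambda>z. F (fst z) (snd z) i)" for i
    by (rule cont_coord[OF cont])
  have cip: "continuous_on ({0..1} \<times> Sph N) (\<lambda>z. ip N (F (fst z) (snd z)) (F (fst z) (snd z)))"
    unfolding ip_def by (intro continuous_intros cF)
  have nz: "\<forall>z \<in> {0..1} \<times> Sph N. sqrt (ip N (F (fst z) (snd z)) (F (fst z) (snd z))) \<noteq> 0"
    using pos by (auto simp: less_le)
  have "continuous_on ({0..1} \<times> Sph N) (\<lambda>z. nrm N (F (fst z) (snd z)))"
  proof (rule continuous_on_coordinatewise_then_product)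
    fix i
    show "continuous_on ({0..1} \<times> Sph N) (\<lambda>z. nrm N (F (fst z) (snd z)) i)"
      unfolding nrm_def by (intro continuous_on_divide cF continuous_on_real_sqrt cip nz)
  qed
  then show "continuous_on ({0..1} \<times> Sph N) (\<lambda>z. (snd z, nrm N (F (fst z) (snd z))))"
  proof -
    have cs: "continuous_on ({0..1} \<times> Sph N) (\<lambda>z::real \<times> (nat \<Rightarrow> real). snd z)"
      by (intro continuous_intros)
    show ?thesis using cs \<open>continuous_on ({0..1} \<times> Sph N) (\<lambda>z. nrm N (F (fst z) (snd z)))\<close>
      by (rule continuous_on_Pair)
  qed
  show "(\<lambda>z. (snd z, nrm N (F (fst z) (snd z)))) ` ({0..1} \<times> Sph N) \<subseteq> Qt m"
  proof clarsimp
    fix t a assume t: "0 \<le> t" "t \<le> (1::real)" and a: "a \<in> Sph N"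
    have t': "t \<in> {0..1}" using t by simp
    have "nrm N (F t a) \<in> Sph N" by (rule nrm_Sph[OF rn[OF t' a] pos[OF t' a]])
    moreover have "ip N a (nrm N (F t a)) = 0"
      unfolding nrm_def ip_div orth[OF t' a] by simp
    ultimately show "(a, nrm N (F t a)) \<in> Qt m" using a N by (simp add: Qt_def)
  qed
  show "\<And>x. x \<in> Sph N \<Longrightarrow> (snd (0, x), nrm N (F (fst (0::real, x)) (snd (0::real, x)))) = f x"
    using f by simp
  show "\<And>x. x \<in> Sph N \<Longrightarrow> (snd (1, x), nrm N (F (fst (1::real, x)) (snd (1::real, x)))) = g x"
    using g by simp
qed


definition G :: "nat \<Rightarrow> mt \<Rightarrow> (nat \<Rightarrow> real) \<Rightarrow> nat \<Rightarrow> real" where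
  "G N W a = (\<lambda>i. - mv N W (J0v N (mv N (tr W) a)) i)"

lemma tr_tr[simp]: "tr (tr A) = A" by (simp add: tr_def)

lemma X_orth: assumes "N = 2*m" shows "ip N a (mv N W (J0v N (mv N (tr W) a))) = 0"
  using ip_adj[of N a W] J0v_skew[OF assms] by simp

lemma ip_negneg: "ip N (\<lambda>i. - x i) (\<lambda>i. - x i) = ip N x x"
  by (simp add: ip_def)

lemma G_orth: assumes "N = 2*m" shows "ip N a (G N W a) = 0"
  unfolding G_def ip_neg X_orth[OF assms] by simp

lemma G_pos: assumes N: "N = 2*m" and W: "detm N W \<noteq> 0" and a: "a \<in> Sph N"
  shows "ip N (G N W a) (G N W a) > 0"
proof -
  define y where "y = mv N (tr W) a"
  define z where "z = J0v N y"
  define X where "X = mv N W z"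
  have GX: "ip N (G N W a) (G N W a) = ip N X X"
    unfolding G_def X_def z_def y_def by (rule ip_negneg)
  have "ip N X X \<noteq> 0"
  proof
    assume h: "ip N X X = 0"
    have "X = (\<lambda>_. 0)" using Rn_ip_zero[OF _ h] X_def by simp
    then have "z = (\<lambda>_. 0)" using detm_inj[OF W, of z] X_def z_def by simp
    then have "ip N y y = 0" using J0v_isom[OF N, of y] z_def by (simp add: ip_def)
    then have "y = (\<lambda>_. 0)" using Rn_ip_zero[of y N] y_def by simp
    then have "a = (\<lambda>_. 0)" using detm_inj[of N "tr W" a] W a y_def
      by (simp add: detm_tr Sph_def)
    then show False using a by (simp add: Sph_def ip_def)
  qed
  then show ?thesis using GX ip_self_nonneg[of N X] by simp
qed

lemma cont_snd_mv:
  "continuous_on S (\<lambda>z::real \<times> (nat \<Rightarrow> real). mv N A (snd z))"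
  by (rule cont_mv) (simp_all add: continuous_on_snd continuous_on_id)

lemma hom1:
  assumes N: "N = 2*m" and J: "ocs N J" and W: "detm N W \<noteq> 0"
    and tw: "\<And>y. mv N W (J0v N y) = mv N J (mv N W y)"
  shows "homotopic_with_canon (\<lambda>_. True) (Sph N) (Qt m) (lam m J) (\<lambda>a. (a, nrm N (G N W a)))"
proof -
  define X where "X a = mv N W (J0v N (mv N (tr W) a))" for a
  define F where "F t a = (\<lambda>i. (t - 1) * mv N J a i + (- t) * X a i)" for t :: real and a
  show ?thesis
  proof (rule field_hom[OF N, where F = F])
    have c1: "continuous_on ({0..1} \<times> Sph N) (\<lambda>z::real \<times> (nat \<Rightarrow> real). mv N J (snd z))"
      by (rule cont_snd_mv)
    have c2: "continuous_on ({0..1} \<times> Sph N) (\<lambda>z::real \<times> (nat \<Rightarrow> real). X (snd z))"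
      unfolding X_def by (intro cont_mv cont_J0v cont_snd_mv continuous_on_const)
    show "continuous_on ({0..1} \<times> Sph N) (\<lambda>z. F (fst z) (snd z))"
      unfolding F_def
      by (intro continuous_on_coordinatewise_then_product continuous_on_add continuous_on_mult
          continuous_on_minus continuous_on_diff continuous_on_fst continuous_on_id continuous_on_const
          cont_coord[OF c1] cont_coord[OF c2])
    fix t a assume t: "t \<in> {0..1::real}" and a: "a \<in> Sph N"
    show "F t a \<in> Rn N" by (simp add: F_def X_def Rn_def mv_def)
    show "ip N a (F t a) = 0"
      unfolding F_def ip_lin2 X_def X_orth[OF N] ocs_skew[OF J] by simp
    define x where "x = (\<lambda>i. (t - 1) * a i + (- t) * mv N W (mv N (tr W) a) i)"
    have Fx: "F t a = mv N J x"
      unfolding x_def mv_lin F_def X_def tw ..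
    have ipax: "ip N a x = (t - 1) - t * ip N (mv N (tr W) a) (mv N (tr W) a)"
      using a unfolding x_def ip_lin2 ip_adj[of N a W] by (simp add: Sph_def)
    have "ip N x x \<noteq> 0"
    proof
      assume h: "ip N x x = 0"
      have "ip N a x = ip N a (\<lambda>_. 0)" by (rule ip_cong) (simp_all add: ip_self_zero[OF h])
      then have e: "(t - 1) - t * ip N (mv N (tr W) a) (mv N (tr W) a) = 0"
        using ipax by (simp add: ip_def)
      have q: "ip N (mv N (tr W) a) (mv N (tr W) a) \<ge> 0" by (rule ip_self_nonneg)
      have "t * ip N (mv N (tr W) a) (mv N (tr W) a) \<ge> 0" using t q by simp
      then have t1: "t = 1" using e t by auto
      then have "ip N (mv N (tr W) a) (mv N (tr W) a) = 0" using e by simp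
      then have "mv N (tr W) a = (\<lambda>_. 0)" by (rule Rn_ip_zero[OF mv_Rn])
      then have "a = (\<lambda>_. 0)" using detm_inj[of N "tr W" a] W a by (simp add: detm_tr Sph_def)
      then show False using a by (simp add: Sph_def ip_def)
    qed
    then show "ip N (F t a) (F t a) > 0"
      using ip_self_nonneg[of N x] unfolding Fx ocs_isom[OF J] by simp
  next
    fix a assume a: "a \<in> Sph N"
    have F0: "F 0 a = (\<lambda>i. - mv N J a i)" by (simp add: F_def)
    have "ip N (F 0 a) (F 0 a) = 1"
      unfolding F0 ip_negneg ocs_isom[OF J] using a by (simp add: Sph_def)
    then have "nrm N (F 0 a) = (\<lambda>i. - mv N J a i)" by (simp add: nrm_def F0)
    then show "lam m J a = (a, nrm N (F 0 a))" by (simp add: lam_def N)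
  next
    fix a assume a: "a \<in> Sph N"
    have "F 1 a = G N W a" by (simp add: F_def G_def X_def)
    then show "(a, nrm N (G N W a)) = (a, nrm N (F 1 a))" by simp
  qed
qed

lemma hom2:
  assumes N: "N = 2*m" and pc: "path_component (NS N) W V"
  shows "homotopic_with_canon (\<lambda>_. True) (Sph N) (Qt m)
           (\<lambda>a. (a, nrm N (G N W a))) (\<lambda>a. (a, nrm N (G N V a)))"
proof -
  obtain g where g: "path g" "path_image g \<subseteq> NS N" "pathstart g = W" "pathfinish g = V"
    using pc unfolding path_component_def by blast
  have gc: "continuous_on {0..1} g" using g(1) by (simp add: path_def)
  have gd: "detm N (g t) \<noteq> 0" if "t \<in> {0..1}" for t
    using g(2) that unfolding path_image_def NS_def by blast
  have ce: "continuous_on ({0..1} \<times> Sph N) (\<lambda>z::real \<times> (nat \<Rightarrow> real). g (fst z) i j)" for i j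
  proof (rule continuous_on_compose2[of "{0..1}" "\<lambda>t. g t i j"])
    show "continuous_on {0..1} (\<lambda>t. g t i j)" by (rule cont_coord[OF cont_coord[OF gc]])
    show "continuous_on ({0..1} \<times> Sph N) (fst :: real \<times> (nat \<Rightarrow> real) \<Rightarrow> real)"
      by (intro continuous_intros)
    show "fst ` ({0..1} \<times> Sph N) \<subseteq> {0..1}" by auto
  qed
  have ctr: "continuous_on ({0..1} \<times> Sph N) (\<lambda>z::real \<times> (nat \<Rightarrow> real). tr (g (fst z)) i j)" for i j
    unfolding tr_def by (rule ce)
  have cX: "continuous_on ({0..1} \<times> Sph N)
      (\<lambda>z::real \<times> (nat \<Rightarrow> real). mv N (g (fst z)) (J0v N (mv N (tr (g (fst z))) (snd z))))"
  proof -
    have cs: "continuous_on ({0..1} \<times> Sph N) (\<lambda>z::real \<times> (nat \<Rightarrow> real). snd z)"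
      by (intro continuous_intros)
    have c1: "continuous_on ({0..1} \<times> Sph N) (\<lambda>z::real \<times> (nat \<Rightarrow> real). mv N (tr (g (fst z))) (snd z))"
      by (rule cont_mv[OF ctr cs])
    have c2: "continuous_on ({0..1} \<times> Sph N) (\<lambda>z::real \<times> (nat \<Rightarrow> real). J0v N (mv N (tr (g (fst z))) (snd z)))"
      by (rule cont_J0v[OF c1])
    show ?thesis by (rule cont_mv[OF ce c2])
  qed
  show ?thesis
  proof (rule field_hom[OF N, where F = "\<lambda>t a. G N (g t) a"])
    show "continuous_on ({0..1} \<times> Sph N) (\<lambda>z. G N (g (fst z)) (snd z))"
      unfolding G_def
      by (intro continuous_on_coordinatewise_then_product continuous_on_minus cont_coord[OF cX])
    fix t a assume t: "t \<in> {0..1::real}" and a: "a \<in> Sph N"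
    show "G N (g t) a \<in> Rn N" by (simp add: G_def Rn_def mv_def)
    show "ip N a (G N (g t) a) = 0" by (rule G_orth[OF N])
    show "ip N (G N (g t) a) (G N (g t) a) > 0" by (rule G_pos[OF N gd[OF t] a])
  next
    fix a show "(a, nrm N (G N W a)) = (a, nrm N (G N (g 0) a))"
      using g(3) by (simp add: pathstart_def)
  next
    fix a show "(a, nrm N (G N V a)) = (a, nrm N (G N (g 1) a))"
      using g(4) by (simp add: pathfinish_def)
  qed
qed

lemma main_hom:
  assumes N: "N = 2*m" and J: "ocs N J" and K: "ocs N K"
    and twJ: "\<And>y. mv N W (J0v N y) = mv N J (mv N W y)"
    and twK: "\<And>y. mv N V (J0v N y) = mv N K (mv N V y)"
    and pc: "path_component (NS N) W V"
  shows "homotopic_with_canon (\<lambda>_. True) (Sph N) (Qt m) (lam m J) (lam m K)"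
proof -
  have W: "detm N W \<noteq> 0" and V: "detm N V \<noteq> 0"
    using path_component_mem[OF pc] by (auto simp: NS_def)
  have h1: "homotopic_with_canon (\<lambda>_. True) (Sph N) (Qt m) (lam m J) (\<lambda>a. (a, nrm N (G N W a)))"
    by (rule hom1[OF N J W twJ])
  have h2: "homotopic_with_canon (\<lambda>_. True) (Sph N) (Qt m) (\<lambda>a. (a, nrm N (G N W a))) (\<lambda>a. (a, nrm N (G N V a)))"
    by (rule hom2[OF N pc])
  have h3: "homotopic_with_canon (\<lambda>_. True) (Sph N) (Qt m) (\<lambda>a. (a, nrm N (G N V a))) (lam m K)"
    using hom1[OF N K V twK] by (simp add: homotopic_with_sym)
  show ?thesis by (rule homotopic_with_trans[OF homotopic_with_trans[OF h1 h2] h3])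
qed


abbreviation pc :: "nat \<Rightarrow> mt \<Rightarrow> mt \<Rightarrow> bool" where "pc N A B \<equiv> path_component (NS N) A B"

lemma cont_mat_path:
  assumes "\<And>i j. continuous_on {0..1} (\<lambda>t::real. g t i j)"
  shows "path (g :: real \<Rightarrow> mt)"
  unfolding path_def
  by (intro continuous_on_coordinatewise_then_product assms)

lemma pc_intro:
  assumes "\<And>i j. continuous_on {0..1} (\<lambda>t::real. g t i j)"
    and "\<And>t. t \<in> {0..1} \<Longrightarrow> detm N (g t) \<noteq> 0"
    and "g 0 = A" "g 1 = B"
  shows "pc N A B"
  unfolding path_component_def
proof (intro exI conjI)
  show "path g" by (rule cont_mat_path[OF assms(1)])
  show "path_image g \<subseteq> NS N" using assms(2) by (auto simp: path_image_def NS_def)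
qed (use assms in \<open>simp_all add: pathstart_def pathfinish_def\<close>)

lemma pc_addr:
  assumes "k < N" "l < N" "k \<noteq> l" "detm N A \<noteq> 0"
  shows "pc N A (addr c k l A)"
proof (rule pc_intro[where g = "\<lambda>t. addr (t * c) k l A"])
  show "continuous_on {0..1} (\<lambda>t. addr (t * c) k l A i j)" for i j
    by (cases "i = k") (simp_all add: addr_def continuous_intros)
  show "detm N (addr (t * c) k l A) \<noteq> 0" for t using assms by (simp add: detm_addr)
  show "addr (0 * c) k l A = A" by (rule ext, rule ext) (simp add: addr_def)
qed simp

lemma pc_multr:
  assumes "k < N" "c > 0" "detm N A \<noteq> 0"
  shows "pc N A (multr k c A)"
proof (rule pc_intro[where g = "\<lambda>t. multr k (1 - t + t * c) A"])
  show "continuous_on {0..1} (\<lambda>t. multr k (1 - t + t * c) A i j)" for i j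
    by (cases "i = k") (simp_all add: multr_def continuous_intros)
  fix t :: real assume t: "t \<in> {0..1}"
  have "1 - t + t * c > 0"
  proof (cases "t = 1")
    case False then have "1 - t > 0" using t by auto
    moreover have "t * c \<ge> 0" using t assms(2) by auto
    ultimately show ?thesis by linarith
  qed (use assms in simp)
  then show "detm N (multr k (1 - t + t * c) A) \<noteq> 0" using assms by (simp add: detm_multr)
next
  show "multr k (1 - 0 + 0 * c) A = A" by (rule ext, rule ext) (simp add: multr_def)
qed simp

lemma pc_agree:
  assumes "detm N A \<noteq> 0" "\<And>i j. i < N \<Longrightarrow> j < N \<Longrightarrow> A i j = B i j"
  shows "pc N A B"
proof (rule pc_intro[where g = "\<lambda>t i j. (1 - t) * A i j + t * B i j"])
  show "continuous_on {0..1} (\<lambda>t. (1 - t) * A i j + t * B i j)" for i j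
    by (intro continuous_intros)
  show "detm N (\<lambda>i j. (1 - t) * A i j + t * B i j) \<noteq> 0" for t
  proof -
    have "detm N (\<lambda>i j. (1 - t) * A i j + t * B i j) = detm N A"
      by (rule detm_cong) (simp add: assms(2) algebra_simps)
    then show ?thesis using assms(1) by simp
  qed
qed auto

definition swn :: "nat \<Rightarrow> nat \<Rightarrow> mt \<Rightarrow> mt" where
  "swn k l A = (\<lambda>i j. if i = k then A l j else if i = l then - A k j else A i j)"

lemma swn_eq: "k \<noteq> l \<Longrightarrow> addr 1 k l (addr (-1) l k (addr 1 k l A)) = swn k l A"
  by (rule ext, rule ext) (auto simp: addr_def swn_def)

lemma pc_swn:
  assumes "k < N" "l < N" "k \<noteq> l" "detm N A \<noteq> 0"
  shows "pc N A (swn k l A) \<and> detm N (swn k l A) = detm N A"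
proof -
  let ?A1 = "addr 1 k l A"
  let ?A2 = "addr (-1) l k ?A1"
  have d1: "detm N ?A1 = detm N A" using assms by (simp add: detm_addr)
  have d2: "detm N ?A2 = detm N A" using assms d1 by (simp add: detm_addr)
  have d3: "detm N (addr 1 k l ?A2) = detm N A" using assms d2 by (simp add: detm_addr)
  have p1: "pc N A ?A1" using assms by (intro pc_addr) auto
  have p2: "pc N ?A1 ?A2" using assms d1 by (intro pc_addr) auto
  have p3: "pc N ?A2 (addr 1 k l ?A2)" using assms d2 by (intro pc_addr) auto
  have "pc N A (addr 1 k l ?A2)" by (rule path_component_trans[OF path_component_trans[OF p1 p2] p3])
  then show ?thesis using d3 swn_eq[OF assms(3)] by simp
qed

definition negr :: "nat \<Rightarrow> nat \<Rightarrow> mt \<Rightarrow> mt" where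
  "negr k l A = (\<lambda>i j. if i = k \<or> i = l then - A i j else A i j)"

lemma swn_swn: "k \<noteq> l \<Longrightarrow> swn k l (swn k l A) = negr k l A"
  by (rule ext, rule ext) (auto simp: swn_def negr_def)

lemma pc_negr:
  assumes "k < N" "l < N" "k \<noteq> l" "detm N A \<noteq> 0"
  shows "pc N A (negr k l A) \<and> detm N (negr k l A) = detm N A"
proof -
  have a: "pc N A (swn k l A)" "detm N (swn k l A) = detm N A" using pc_swn[OF assms] by auto
  have b: "pc N (swn k l A) (swn k l (swn k l A))" "detm N (swn k l (swn k l A)) = detm N A"
    using pc_swn[OF assms(1-3), of "swn k l A"] a assms(4) by auto
  show ?thesis using path_component_trans[OF a(1) b(1)] b(2) swn_swn[OF assms(3)] by simp
qed

definition good :: "nat \<Rightarrow> nat \<Rightarrow> mt \<Rightarrow> bool" where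
  "good N k A \<longleftrightarrow> (\<forall>i<N. \<forall>j<k. A i j = (if i = j then 1 else 0))"

lemma pivot:
  assumes g: "good N k A" and k: "k < N" and d: "detm N A \<noteq> 0"
  shows "\<exists>r. k \<le> r \<and> r < N \<and> A r k \<noteq> 0"
proof (rule ccontr)
  assume "\<not> ?thesis"
  then have z: "\<And>r. k \<le> r \<Longrightarrow> r < N \<Longrightarrow> A r k = 0" by auto
  define v where "v = (\<lambda>j. if j = k then 1 else if j < k then - A j k else (0::real))"
  have vR: "v \<in> Rn N" using k by (auto simp: v_def Rn_def)
  have vnz: "v \<noteq> (\<lambda>_. 0)"
  proof
    assume "v = (\<lambda>_. 0)"
    then have "v k = 0" by simp
    then show False by (simp add: v_def)
  qed
  have "mv N A v = (\<lambda>_. 0)"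
  proof
    fix i
    show "mv N A v i = 0"
    proof (cases "i < N")
      case True
      have e: "A i j * v j = (if j = k then A i k else 0) - (if j = i then (if i < k then A i k else 0) else 0)"
        if j: "j < N" for j
      proof -
        consider "j = k" | "j < k" | "j > k" by linarith
        then show ?thesis
        proof cases
          case 1 then show ?thesis by (simp add: v_def)
        next
          case 2
          have "A i j = (if i = j then 1 else 0)" using g True 2 by (simp add: good_def)
          then show ?thesis using 2 by (auto simp: v_def)
        next
          case 3 then show ?thesis by (auto simp: v_def)
        qed
      qed
      have "(\<Sum>j<N. A i j * v j) = (\<Sum>j<N. (if j = k then A i k else 0) - (if j = i then (if i < k then A i k else 0) else 0))"
        by (rule sum.cong) (simp_all add: e)
      also have "\<dots> = A i k - (if i < k then A i k else 0)"
        using k True by (simp add: sum_subtractf)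
      also have "\<dots> = 0" using z[of i] True by auto
      finally show ?thesis using True by (simp add: mv_def)
    qed (simp add: mv_def)
  qed
  then show False using detm_inj[OF d vR] vnz by simp
qed


lemma step_pivot:
  assumes g: "good N k A" and k: "k < N" and d: "detm N A \<noteq> 0"
  shows "\<exists>A1. pc N A A1 \<and> detm N A1 = detm N A \<and> good N k A1 \<and> A1 k k \<noteq> 0"
proof (cases "A k k = 0")
  case False
  have "pc N A A" using d by (intro path_component_refl) (simp add: NS_def)
  then show ?thesis using False g by blast
next
  case True
  obtain r where r: "k \<le> r" "r < N" "A r k \<noteq> 0" using pivot[OF g k d] by blast
  have rk: "k \<noteq> r" using True r by auto
  let ?A1 = "addr 1 k r A"
  have "pc N A ?A1" by (rule pc_addr[OF k r(2) rk d])
  moreover have "detm N ?A1 = detm N A" by (rule detm_addr[OF k r(2) rk])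
  moreover have "good N k ?A1"
    unfolding good_def
  proof (intro allI impI)
    fix i j assume i: "i < N" and j: "j < k"
    have "A k j = 0" "A r j = 0" using g j k r(1,2) by (auto simp: good_def)
    then show "?A1 i j = (if i = j then 1 else 0)" using g i j by (auto simp: addr_def good_def)
  qed
  moreover have "?A1 k k \<noteq> 0" using True r by (simp add: addr_def)
  ultimately show ?thesis by blast
qed

lemma clear:
  assumes g: "good N k A" and k: "k < N" and d: "detm N A \<noteq> 0" and p: "A k k \<noteq> 0"
  shows "m \<le> N \<Longrightarrow> \<exists>B. pc N A B \<and> detm N B = detm N A \<and> good N k B \<and> B k k = A k k
            \<and> (\<forall>i<m. i \<noteq> k \<longrightarrow> B i k = 0)"
proof (induction m)
  case 0
  have "pc N A A" using d by (intro path_component_refl) (simp add: NS_def)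
  then show ?case using g by blast
next
  case (Suc m)
  then obtain B where B: "pc N A B" "detm N B = detm N A" "good N k B" "B k k = A k k"
    "\<forall>i<m. i \<noteq> k \<longrightarrow> B i k = 0" by auto
  have m: "m < N" using Suc by simp
  show ?case
  proof (cases "m = k \<or> B m k = 0")
    case True
    then show ?thesis using B by (metis less_Suc_eq)
  next
    case False
    then have mk: "m \<noteq> k" by simp
    let ?c = "- (B m k / B k k)"
    let ?B = "addr ?c m k B"
    have dB: "detm N B \<noteq> 0" using B(2) d by simp
    have "pc N B ?B" by (rule pc_addr[OF m k mk dB])
    then have "pc N A ?B" using B(1) by (rule path_component_trans[rotated])
    moreover have "detm N ?B = detm N A" using detm_addr[OF m k mk] B(2) by simp
    moreover have "good N k ?B"
      unfolding good_def
    proof (intro allI impI)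
      fix i j assume i: "i < N" and j: "j < k"
      have "B k j = 0" using B(3) j k by (auto simp: good_def)
      then show "?B i j = (if i = j then 1 else 0)" using B(3) i j by (auto simp: addr_def good_def)
    qed
    moreover have "?B k k = A k k" using mk B(4) by (simp add: addr_def)
    moreover have "\<forall>i<Suc m. i \<noteq> k \<longrightarrow> ?B i k = 0"
    proof (intro allI impI)
      fix i assume i: "i < Suc m" "i \<noteq> k"
      show "?B i k = 0"
      proof (cases "i = m")
        case True
        have "B k k \<noteq> 0" using B(4) p by simp
        then show ?thesis using True by (simp add: addr_def)
      next
        case False
        then show ?thesis using i B(5) by (simp add: addr_def)
      qed
    qed
    ultimately show ?thesis by blast
  qed
qed

lemma colpos:
  assumes g: "good N k B" and k: "k < N" and c: "\<And>i. i < N \<Longrightarrow> i \<noteq> k \<Longrightarrow> B i k = 0"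
    and p: "B k k > 0" and d: "detm N B > 0"
  shows "\<exists>B'. pc N B B' \<and> detm N B' > 0 \<and> good N (Suc k) B'"
proof -
  let ?B = "multr k (1 / B k k) B"
  have "pc N B ?B" using d p by (intro pc_multr k) auto
  moreover have "detm N ?B > 0" using d p by (simp add: detm_multr k)
  moreover have "good N (Suc k) ?B"
    unfolding good_def
  proof (intro allI impI)
    fix i j assume i: "i < N" and j: "j < Suc k"
    show "?B i j = (if i = j then 1 else 0)"
    proof (cases "j = k")
      case True
      then show ?thesis using p c[OF i] by (auto simp: multr_def)
    next
      case False
      then have "j < k" using j by simp
      then show ?thesis using g i k by (auto simp: multr_def good_def)
    qed
  qed
  ultimately show ?thesis by blast
qed

lemma step:
  assumes g: "good N k A" and k: "k < N" and d: "detm N A > 0"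
  shows "\<exists>B. pc N A B \<and> detm N B > 0 \<and> good N (Suc k) B"
proof -
  obtain A1 where A1: "pc N A A1" "detm N A1 = detm N A" "good N k A1" "A1 k k \<noteq> 0"
    using step_pivot[OF g k] d by auto
  obtain B where B: "pc N A1 B" "detm N B = detm N A1" "good N k B" "B k k = A1 k k"
      "\<forall>i<N. i \<noteq> k \<longrightarrow> B i k = 0"
    using clear[OF A1(3) k _ A1(4), of N] A1(2) d by auto
  have AB: "pc N A B" by (rule path_component_trans[OF A1(1) B(1)])
  have dB: "detm N B > 0" using B(2) A1(2) d by simp
  show ?thesis
  proof (cases "B k k > 0")
    case True
    then obtain B' where "pc N B B'" "detm N B' > 0" "good N (Suc k) B'"
      using colpos[OF B(3) k _ True dB] B(5) by auto
    then show ?thesis using path_component_trans[OF AB] by blast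
  next
    case False
    then have neg: "B k k < 0" using B(4) A1(4) by auto
    show ?thesis
    proof (cases "Suc k < N")
      case True
      let ?B2 = "negr k (Suc k) B"
      have n2: "pc N B ?B2" "detm N ?B2 = detm N B"
        using pc_negr[OF k True _, of B] dB by auto
      have g2: "good N k ?B2"
        unfolding good_def
      proof (intro allI impI)
        fix i j assume i: "i < N" and j: "j < k"
        show "?B2 i j = (if i = j then 1 else 0)"
          using B(3) i j k True by (auto simp: negr_def good_def)
      qed
      have c2: "?B2 i k = 0" if "i < N" "i \<noteq> k" for i
        using B(5) that True by (auto simp: negr_def)
      have p2: "?B2 k k > 0" using neg by (simp add: negr_def)
      obtain B' where "pc N ?B2 B'" "detm N B' > 0" "good N (Suc k) B'"
        using colpos[OF g2 k c2 p2] n2(2) dB by auto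
      then show ?thesis using path_component_trans[OF AB path_component_trans[OF n2(1)]] by blast
    next
      case False
      then have kN: "Suc k = N" using k by simp
      have "detm N B = detm N (multr k (B k k) (Idm N))"
      proof (rule detm_cong)
        fix i j assume i: "i < N" and j: "j < N"
        show "B i j = multr k (B k k) (Idm N) i j"
        proof (cases "j = k")
          case True
          then show ?thesis using B(5) i by (auto simp: multr_def Idm_def)
        next
          case False
          then have "j < k" using j kN by simp
          then show ?thesis using B(3) i by (auto simp: multr_def Idm_def good_def)
        qed
      qed
      also have "\<dots> = B k k" using k by (simp add: detm_multr detm_Idm)
      finally show ?thesis using neg dB by simp
    qed
  qed
qed

lemma reduce:
  assumes d: "detm N A > 0"
  shows "k \<le> N \<Longrightarrow> \<exists>B. pc N A B \<and> detm N B > 0 \<and> good N k B"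
proof (induction k)
  case 0
  have "pc N A A" using d by (intro path_component_refl) (simp add: NS_def)
  then show ?case using d by (auto simp: good_def)
next
  case (Suc k)
  then obtain B where B: "pc N A B" "detm N B > 0" "good N k B" by auto
  obtain B' where "pc N B B'" "detm N B' > 0" "good N (Suc k) B'"
    using step[OF B(3) _ B(2)] Suc(2) by auto
  then show ?case using path_component_trans[OF B(1)] by blast
qed

lemma GLpos: assumes "detm N A > 0" shows "pc N A (Idm N)"
proof -
  obtain B where B: "pc N A B" "detm N B > 0" "good N N B" using reduce[OF assms, of N] by auto
  have "pc N B (Idm N)"
    by (rule pc_agree) (use B in \<open>auto simp: good_def Idm_def\<close>)
  then show ?thesis using path_component_trans[OF B(1)] by blast
qed

lemma pc_map:
  assumes p: "path_component (NS N1) A B"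
    and h: "continuous_on UNIV (h :: mt \<Rightarrow> mt)"
    and hd: "\<And>X. detm N1 X \<noteq> 0 \<Longrightarrow> detm N2 (h X) \<noteq> 0"
  shows "path_component (NS N2) (h A) (h B)"
proof -
  obtain g where g: "path g" "path_image g \<subseteq> NS N1" "pathstart g = A" "pathfinish g = B"
    using p unfolding path_component_def by blast
  show ?thesis
    unfolding path_component_def
  proof (intro exI conjI)
    show "path (h \<circ> g)" unfolding path_def
      using g(1) unfolding path_def by (intro continuous_on_compose continuous_on_subset[OF h]) auto
    show "path_image (h \<circ> g) \<subseteq> NS N2" using g(2) hd by (auto simp: path_image_def NS_def)
  qed (use g in \<open>simp_all add: pathstart_def pathfinish_def\<close>)
qed

lemma cont_entry: "continuous_on UNIV (\<lambda>X :: mt. X i j)"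
proof -
  have c: "continuous_on UNIV (\<lambda>X::mt. X i)" by simp
  show ?thesis using continuous_on_product_then_coordinatewise[OF c, of j] by simp
qed

lemma GLneg: assumes d: "detm N A < 0" and N: "0 < N"
  shows "pc N A (multr 0 (-1) (Idm N))"
proof -
  let ?h = "multr 0 (-1)"
  have "detm N (?h A) > 0" using d N by (simp add: detm_multr)
  then have p: "pc N (?h A) (Idm N)" by (rule GLpos)
  have hc: "continuous_on UNIV ?h"
  proof (intro continuous_on_coordinatewise_then_product)
    fix i j show "continuous_on UNIV (\<lambda>X :: mt. multr 0 (-1) X i j)"
      by (cases "i = 0") (simp_all add: multr_def cont_entry continuous_on_minus)
  qed
  have "pc N (?h (?h A)) (?h (Idm N))"
    by (rule pc_map[OF p hc]) (simp add: detm_multr N)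
  moreover have "?h (?h A) = A" by (rule ext, rule ext) (simp add: multr_def)
  ultimately show ?thesis by simp
qed


definition ext2 :: "nat \<Rightarrow> mt \<Rightarrow> real \<Rightarrow> real \<Rightarrow> real \<Rightarrow> real \<Rightarrow> mt" where
  "ext2 N A b00 b01 b10 b11 = (\<lambda>i j. if i < N \<and> j < N then A i j
     else if i = N \<and> j = N then b00 else if i = N \<and> j = Suc N then b01
     else if i = Suc N \<and> j = N then b10 else if i = Suc N \<and> j = Suc N then b11 else 0)"

lemma mv_ext2:
  "mv (Suc (Suc N)) (ext2 N A b00 b01 b10 b11) y = (\<lambda>i. if i < N then mv N A y i
     else if i = N then b00 * y N + b01 * y (Suc N)
     else if i = Suc N then b10 * y N + b11 * y (Suc N) else 0)"
proof
  fix i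
  have s1: "(\<Sum>k<N. ext2 N A b00 b01 b10 b11 i k * y k) = (if i < N then (\<Sum>k<N. A i k * y k) else 0)"
    by (cases "i < N") (auto simp: ext2_def intro!: sum.neutral)
  show "mv (Suc (Suc N)) (ext2 N A b00 b01 b10 b11) y i = (if i < N then mv N A y i
     else if i = N then b00 * y N + b01 * y (Suc N)
     else if i = Suc N then b10 * y N + b11 * y (Suc N) else 0)"
    unfolding mv_def by (simp add: s1) (auto simp: ext2_def)
qed

lemma ip_SS: "ip (Suc (Suc N)) x y = ip N x y + x N * y N + x (Suc N) * y (Suc N)"
  by (simp add: ip_def)

lemma ocs_ext2:
  assumes J: "ocs N J"
  shows "ocs (Suc (Suc N)) (ext2 N J 0 (-1) 1 0)"
proof -
  let ?E = "ext2 N J 0 (-1) 1 0"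
  have o1: "\<And>i j. i < N \<Longrightarrow> j < N \<Longrightarrow> (\<Sum>k<N. J i k * J k j) = (if i = j then -1 else 0)"
    and o2: "\<And>i j. i < N \<Longrightarrow> j < N \<Longrightarrow> (\<Sum>k<N. J k i * J k j) = (if i = j then 1 else 0)"
    using J unfolding ocs_def by blast+
  have S1: "(\<Sum>k<N. ?E i k * ?E k j) = (if i < N \<and> j < N then (\<Sum>k<N. J i k * J k j) else 0)" for i j
    by (cases "i < N \<and> j < N") (auto simp: ext2_def intro!: sum.neutral)
  have S2: "(\<Sum>k<N. ?E k i * ?E k j) = (if i < N \<and> j < N then (\<Sum>k<N. J k i * J k j) else 0)" for i j
    by (cases "i < N \<and> j < N") (auto simp: ext2_def intro!: sum.neutral)
  have EiN: "?E i N = (if i = Suc N then 1 else 0)" for i by (simp add: ext2_def)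
  have EiSN: "?E i (Suc N) = (if i = N then -1 else 0)" for i by (simp add: ext2_def)
  have ENj: "?E N j = (if j = Suc N then -1 else 0)" for j by (simp add: ext2_def)
  have ESNj: "?E (Suc N) j = (if j = N then 1 else 0)" for j by (simp add: ext2_def)
  have c1: "(\<Sum>k<Suc (Suc N). ?E i k * ?E k j) = (if i = j then -1 else 0)"
    if "i < Suc (Suc N)" "j < Suc (Suc N)" for i j
  proof -
    have iN: "i < N \<or> i = N \<or> i = Suc N" and jN: "j < N \<or> j = N \<or> j = Suc N" using that by auto
    have "(\<Sum>k<Suc (Suc N). ?E i k * ?E k j) = (\<Sum>k<N. ?E i k * ?E k j) + ?E i N * ?E N j + ?E i (Suc N) * ?E (Suc N) j"
      by simp
    also have "\<dots> = (if i = j then -1 else 0)"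
      unfolding S1 EiN EiSN ENj ESNj using iN jN o1[of i j] by auto
    finally show ?thesis .
  qed
  have c2: "(\<Sum>k<Suc (Suc N). ?E k i * ?E k j) = (if i = j then 1 else 0)"
    if "i < Suc (Suc N)" "j < Suc (Suc N)" for i j
  proof -
    have iN: "i < N \<or> i = N \<or> i = Suc N" and jN: "j < N \<or> j = N \<or> j = Suc N" using that by auto
    have "(\<Sum>k<Suc (Suc N). ?E k i * ?E k j) = (\<Sum>k<N. ?E k i * ?E k j) + ?E N i * ?E N j + ?E (Suc N) i * ?E (Suc N) j"
      by simp
    also have "\<dots> = (if i = j then 1 else 0)"
      unfolding S2 ENj ESNj using iN jN o2[of i j] by auto
    finally show ?thesis .
  qed
  show ?thesis unfolding ocs_def using c1 c2 by blast
qed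

lemma detm_ext2:
  assumes d: "detm N A \<noteq> 0"
  shows "detm (Suc (Suc N)) (ext2 N A 1 0 0 1) \<noteq> 0"
proof
  assume "detm (Suc (Suc N)) (ext2 N A 1 0 0 1) = 0"
  then obtain x where x: "x \<in> Rn (Suc (Suc N))" "x \<noteq> (\<lambda>_. 0)" "mv (Suc (Suc N)) (ext2 N A 1 0 0 1) x = (\<lambda>_. 0)"
    using detm_zero_iff by blast
  have e: "\<And>i. (if i < N then mv N A x i else if i = N then 1 * x N + 0 * x (Suc N)
     else if i = Suc N then 0 * x N + 1 * x (Suc N) else 0) = 0"
    using fun_cong[OF x(3)] unfolding mv_ext2 by simp
  have xN: "x N = 0" "x (Suc N) = 0" using e[of N] e[of "Suc N"] by auto
  define x' where "x' = (\<lambda>i. if i < N then x i else 0)"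
  have "mv N A x' = mv N A x" by (rule mv_cong) (simp add: x'_def)
  also have "\<dots> = (\<lambda>_. 0)"
  proof
    fix i show "mv N A x i = 0"
      using e[of i] by (cases "i < N") (simp_all add: mv_def)
  qed
  finally have "x' = (\<lambda>_. 0)" using detm_inj[OF d] by (simp add: x'_def Rn_def)
  then have "x = (\<lambda>_. 0)"
  proof -
    assume h: "x' = (\<lambda>_. 0)"
    show ?thesis
    proof
      fix i show "x i = 0"
      proof (cases "i < N")
        case True then show ?thesis using fun_cong[OF h, of i] by (simp add: x'_def)
      next
        case False
        then consider "i = N" | "i = Suc N" | "i \<ge> Suc (Suc N)" by linarith
        then show ?thesis using xN x(1) by cases (auto simp: Rn_def)
      qed
    qed
  qed
  then show False using x(2) by simp
qed

lemma cont_ext2: "continuous_on UNIV (\<lambda>A. ext2 N A b00 b01 b10 b11)"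
proof (intro continuous_on_coordinatewise_then_product)
  fix i j show "continuous_on UNIV (\<lambda>A. ext2 N A b00 b01 b10 b11 i j)"
  proof (cases "i < N \<and> j < N")
    case True then show ?thesis by (simp add: ext2_def cont_entry)
  next
    case False
    then have "(\<lambda>A. ext2 N A b00 b01 b10 b11 i j) = (\<lambda>A. ext2 N (\<lambda>_ _. 0) b00 b01 b10 b11 i j)"
      by (auto simp: ext2_def)
    then show ?thesis by (simp only:) (rule continuous_on_const)
  qed
qed

lemma T5: "i < Suc (Suc N) \<Longrightarrow> Idm (Suc (Suc N)) i j = ext2 N (Idm N) 1 0 0 1 i j"
  by (simp add: ext2_def Idm_def)

lemma ext2_Idm: "ext2 N (Idm N) 1 0 0 1 = Idm (Suc (Suc N))"
proof (rule ext, rule ext)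
  fix i j
  show "ext2 N (Idm N) 1 0 0 1 i j = Idm (Suc (Suc N)) i j"
  proof (cases "i < Suc (Suc N)")
    case True then show ?thesis by (simp add: T5)
  next
    case False
    then have "\<not> i < N" "i \<noteq> N" "i \<noteq> Suc N" by auto
    then show ?thesis using False by (simp add: ext2_def Idm_def)
  qed
qed

lemma T1: "i \<noteq> 0 \<Longrightarrow> multr 0 c X i j = X i j" by (simp add: multr_def)
lemma T2: "0 < N \<Longrightarrow> j < N \<Longrightarrow> ext2 N B b00 b01 b10 b11 0 j = B 0 j" by (simp add: ext2_def)
lemma T3: "0 < N \<Longrightarrow> \<not> j < N \<Longrightarrow> ext2 N B b00 b01 b10 b11 0 j = 0" by (simp add: ext2_def)
lemma T4: "i \<noteq> 0 \<Longrightarrow> ext2 N (multr 0 c A) b00 b01 b10 b11 i j = ext2 N A b00 b01 b10 b11 i j"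
  by (simp add: ext2_def multr_def)

lemma ext2_multr: assumes "0 < N" shows "ext2 N (multr 0 c A) 1 0 0 1 = multr 0 c (ext2 N A 1 0 0 1)"
proof (rule ext, rule ext)
  fix i j
  show "ext2 N (multr 0 c A) 1 0 0 1 i j = multr 0 c (ext2 N A 1 0 0 1) i j"
  proof (cases "i = 0")
    case True
    show ?thesis
    proof (cases "j < N")
      case True2: True
      have "ext2 N (multr 0 c A) 1 0 0 1 0 j = multr 0 c A 0 j" by (rule T2[OF assms True2])
      moreover have "ext2 N A 1 0 0 1 0 j = A 0 j" by (rule T2[OF assms True2])
      ultimately show ?thesis using True by (simp add: multr_def)
    next
      case False2: False
      have "ext2 N (multr 0 c A) 1 0 0 1 0 j = 0" by (rule T3[OF assms False2])
      moreover have "ext2 N A 1 0 0 1 0 j = 0" by (rule T3[OF assms False2])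
      ultimately show ?thesis using True by (simp add: multr_def)
    qed
  next
    case False then show ?thesis by (simp only: T4[OF False] T1[OF False])
  qed
qed

lemma ext2_D: "0 < N \<Longrightarrow> ext2 N (multr 0 (-1) (Idm N)) 1 0 0 1 = multr 0 (-1) (Idm (Suc (Suc N)))"
  by (simp add: ext2_multr ext2_Idm)

lemma pc_ext2:
  assumes "pc N A B"
  shows "pc (Suc (Suc N)) (ext2 N A 1 0 0 1) (ext2 N B 1 0 0 1)"
  by (rule pc_map[OF assms cont_ext2 detm_ext2])

lemma col_ext2:
  assumes p: "p < Suc n" and i: "i < Suc (Suc (2*n))"
  shows "ext2 (2*n) (cbasis_mat (2*n) J w) 1 0 0 1 i (2*p+1)
       = mv (Suc (Suc (2*n))) (ext2 (2*n) J 0 (-1) 1 0)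
           (\<lambda>j. ext2 (2*n) (cbasis_mat (2*n) J w) 1 0 0 1 j (2*p)) i"
proof (cases "p < n")
  case True
  have pp: "2*p < 2*n" "Suc (2*p) < 2*n" using True by auto
  have m: "mv (2*n) J (\<lambda>j. ext2 (2*n) (cbasis_mat (2*n) J w) 1 0 0 1 j (2*p))
          = mv (2*n) J (w p)"
    by (rule mv_cong) (simp add: ext2_def cbasis_mat_def pp True)
  show ?thesis
    unfolding mv_ext2 m using pp i
    by (auto simp: ext2_def cbasis_mat_def mv_def)
next
  case False
  then have pn: "p = n" using p by simp
  have m: "mv (2*n) J (\<lambda>j. ext2 (2*n) (cbasis_mat (2*n) J w) 1 0 0 1 j (2*n)) = (\<lambda>_. 0)"
    unfolding mv_def by (rule ext) (simp add: ext2_def)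
  show ?thesis
    unfolding mv_ext2 pn m using i by (auto simp: ext2_def)
qed


lemma mv_scale: "mv N A (\<lambda>i. c * x i) = (\<lambda>i. c * mv N A x i)"
  by (rule ext) (simp add: mv_def sum_distrib_left mult_ac)

lemma skey:
  assumes a: "a \<in> Sph (Suc (Suc (2*n)))" and i: "i < 2*n"
  shows "sqrt (1 - (a (2*n))\<^sup>2 - (a (Suc (2*n)))\<^sup>2) * (a i / sqrt (1 - (a (2*n))\<^sup>2 - (a (Suc (2*n)))\<^sup>2)) = a i"
proof -
  have "ip (Suc (Suc (2*n))) a a = 1" using a by (simp add: Sph_def)
  then have e: "1 - (a (2*n))\<^sup>2 - (a (Suc (2*n)))\<^sup>2 = ip (2*n) a a"
    unfolding ip_SS by (simp add: power2_eq_square)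
  show ?thesis
  proof (cases "ip (2*n) a a = 0")
    case True then have "a i = 0" using ip_self_zero i by blast
    then show ?thesis by simp
  next
    case False then have "sqrt (ip (2*n) a a) \<noteq> 0" by simp
    then show ?thesis unfolding e by simp
  qed
qed

lemma comp_gen:
  assumes a': "a' \<in> Rn (Suc (Suc (2*n)))" and sv: "\<And>j. j < 2*n \<Longrightarrow> s * v j = a' j"
  shows "iota n (((\<lambda>i. s * v i), (\<lambda>i. s * - mv (2*n) J v i)), (a' (2*n), a' (Suc (2*n))))
         = lam (Suc n) (ext2 (2*n) J 0 (-1) 1 0) a'"
proof -
  have "mv (2*n) J (\<lambda>i. s * v i) = mv (2*n) J a'" by (rule mv_cong) (simp add: sv)
  then have mm: "(\<lambda>i. s * mv (2*n) J v i) = mv (2*n) J a'" by (simp add: mv_scale)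
  have m: "(\<lambda>i. s * - mv (2*n) J v i) = (\<lambda>i. - mv (2*n) J a' i)"
  proof
    fix i show "s * - mv (2*n) J v i = - mv (2*n) J a' i" using fun_cong[OF mm, of i] by simp
  qed
  have e1: "emb n (\<lambda>i. s * v i) (a' (2*n)) (a' (Suc (2*n))) = a'"
  proof
    fix i
    show "emb n (\<lambda>i. s * v i) (a' (2*n)) (a' (Suc (2*n))) i = a' i"
    proof (cases "i < 2*n")
      case True then show ?thesis by (simp add: emb_def sv)
    next
      case False
      then consider "i = 2*n" | "i = Suc (2*n)" | "i \<ge> Suc (Suc (2*n))" by linarith
      then show ?thesis using a' by cases (auto simp: emb_def Rn_def)
    qed
  qed
  have e2: "emb n (\<lambda>i. - mv (2*n) J a' i) (a' (Suc (2*n))) (- a' (2*n))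
      = (\<lambda>i. - mv (2 * Suc n) (ext2 (2*n) J 0 (-1) 1 0) a' i)"
  proof
    fix i
    have ee: "2 * Suc n = Suc (Suc (2*n))" by simp
    show "emb n (\<lambda>i. - mv (2*n) J a' i) (a' (Suc (2*n))) (- a' (2*n)) i
      = - mv (2 * Suc n) (ext2 (2*n) J 0 (-1) 1 0) a' i"
      unfolding ee mv_ext2 by (simp add: emb_def)
  qed
  show ?thesis unfolding iota_def lam_def using m e1 e2 by simp
qed

lemma sigma2_eq:
  "sigma2 n f a = (let s = sqrt (1 - (a (2*n))\<^sup>2 - (a (Suc (2*n)))\<^sup>2);
                       u = (\<lambda>i. if i < 2*n then a i / s else 0)
                   in (((\<lambda>i. s * fst (f u) i), (\<lambda>i. s * snd (f u) i)), (a (2*n), a (Suc (2*n)))))"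
  by (simp add: sigma2_def Let_def)

lemma comp_pos:
  assumes a: "a \<in> Sph (Suc (Suc (2*n)))"
  shows "(iota n \<circ> sigma2 n (lam n J)) a = lam (Suc n) (ext2 (2*n) J 0 (-1) 1 0) a"
proof -
  define s where "s = sqrt (1 - (a (2*n))\<^sup>2 - (a (Suc (2*n)))\<^sup>2)"
  define u where "u = (\<lambda>i. if i < 2*n then a i / s else 0)"
  have sg: "sigma2 n (lam n J) a = (((\<lambda>i. s * u i), (\<lambda>i. s * - mv (2*n) J u i)), (a (2*n), a (Suc (2*n))))"
    unfolding sigma2_eq Let_def s_def[symmetric] u_def[symmetric] by (simp add: lam_def)
  have sv: "s * u j = a j" if "j < 2*n" for j
    using skey[OF a that] that by (simp add: u_def s_def)
  have aR: "a \<in> Rn (Suc (Suc (2*n)))" using a by (simp add: Sph_def)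
  show ?thesis using comp_gen[OF aR sv] sg by simp
qed

lemma comp_neg:
  assumes a: "a \<in> Sph (Suc (Suc (2*n)))" and n: "0 < n"
  shows "(iota n \<circ> sigma2 n (lam n J \<circ> refl0)) a = (lam (Suc n) (ext2 (2*n) J 0 (-1) 1 0) \<circ> refl0) a"
proof -
  define s where "s = sqrt (1 - (a (2*n))\<^sup>2 - (a (Suc (2*n)))\<^sup>2)"
  define u where "u = (\<lambda>i. if i < 2*n then a i / s else 0)"
  have sg: "sigma2 n (lam n J \<circ> refl0) a = (((\<lambda>i. s * refl0 u i), (\<lambda>i. s * - mv (2*n) J (refl0 u) i)), (a (2*n), a (Suc (2*n))))"
    unfolding sigma2_eq Let_def s_def[symmetric] u_def[symmetric] by (simp add: lam_def)
  have sv0: "s * u j = a j" if "j < 2*n" for j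
    using skey[OF a that] that by (simp add: u_def s_def)
  have sv: "s * refl0 u j = refl0 a j" if "j < 2*n" for j
    using sv0[OF that] sv0[of 0] n by (simp add: refl0_def)
  have aR: "refl0 a \<in> Rn (Suc (Suc (2*n)))" using a by (simp add: Sph_def Rn_def refl0_def)
  have x: "refl0 a (2*n) = a (2*n)" "refl0 a (Suc (2*n)) = a (Suc (2*n))" using n by (simp_all add: refl0_def)
  show ?thesis using comp_gen[OF aR sv] sg x by simp
qed

lemma refl0_Sph: assumes "a \<in> Sph N" "0 < N" shows "refl0 a \<in> Sph N"
proof -
  have "refl0 a \<in> Rn N" using assms by (simp add: Sph_def Rn_def refl0_def)
  moreover have "ip N (refl0 a) (refl0 a) = ip N a a"
    unfolding ip_def by (rule sum.cong) (auto simp: refl0_def)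
  ultimately show ?thesis using assms by (simp add: Sph_def)
qed

lemma cont_refl0: "continuous_on S refl0"
proof (rule continuous_on_coordinatewise_then_product)
  fix i
  have c: "continuous_on S (\<lambda>x::nat \<Rightarrow> real. x j)" for j
    by (rule continuous_on_subset[OF continuous_on_product_coordinates]) simp
  show "continuous_on S (\<lambda>x. refl0 x i)"
    by (cases "i = 0") (simp_all add: refl0_def c continuous_on_minus)
qed


lemma key_hom:
  assumes J: "ocs (2*n) J" and J': "ocs (Suc (Suc (2*n))) J'"
    and p: "pc (Suc (Suc (2*n))) (ext2 (2*n) (cbasis_mat (2*n) J w) 1 0 0 1) (cbasis_mat (Suc (Suc (2*n))) J' w')"
  shows "homotopic_with_canon (\<lambda>_. True) (Sph (Suc (Suc (2*n)))) (Qt (Suc n))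
           (lam (Suc n) (ext2 (2*n) J 0 (-1) 1 0)) (lam (Suc n) J')"
proof (rule main_hom)
  show N: "Suc (Suc (2*n)) = 2 * Suc n" by simp
  show J2: "ocs (Suc (Suc (2*n))) (ext2 (2*n) J 0 (-1) 1 0)" by (rule ocs_ext2[OF J])
  show "ocs (Suc (Suc (2*n))) J'" by (rule J')
  show "mv (Suc (Suc (2*n))) (ext2 (2*n) (cbasis_mat (2*n) J w) 1 0 0 1) (J0v (Suc (Suc (2*n))) y)
      = mv (Suc (Suc (2*n))) (ext2 (2*n) J 0 (-1) 1 0) (mv (Suc (Suc (2*n))) (ext2 (2*n) (cbasis_mat (2*n) J w) 1 0 0 1) y)" for y
    by (rule intertwine[OF N J2]) (rule col_ext2)
  show "mv (Suc (Suc (2*n))) (cbasis_mat (Suc (Suc (2*n))) J' w') (J0v (Suc (Suc (2*n))) y)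
      = mv (Suc (Suc (2*n))) J' (mv (Suc (Suc (2*n))) (cbasis_mat (Suc (Suc (2*n))) J' w') y)" for y
    by (rule intertwine[OF N J']) (rule cbasis_col[OF N])
  show "pc (Suc (Suc (2*n))) (ext2 (2*n) (cbasis_mat (2*n) J w) 1 0 0 1) (cbasis_mat (Suc (Suc (2*n))) J' w')"
    by (rule p)
qed

theorem lemmaA1:
  fixes n :: nat and Jp Jm Jp' Jm' :: "nat \<Rightarrow> nat \<Rightarrow> real"
  assumes "n \<ge> 2"
    and "ocs (2*n) Jp" and "pos_compat (2*n) Jp"
    and "ocs (2*n+2) Jp'" and "pos_compat (2*n+2) Jp'"
    and "ocs (2*n) Jm" and "neg_compat (2*n) Jm"
    and "ocs (2*n+2) Jm'" and "neg_compat (2*n+2) Jm'"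
  shows "homotopic_with_canon (\<lambda>_. True) (Sph (2*n+2)) (Qt (Suc n))
           (iota n \<circ> sigma2 n (lam n Jp)) (lam (Suc n) Jp') \<and>
         homotopic_with_canon (\<lambda>_. True) (Sph (2*n+2)) (Qt (Suc n))
           (iota n \<circ> sigma2 n (lam n Jm \<circ> refl0)) (lam (Suc n) Jm' \<circ> refl0)"
proof -
  have eN: "2*n+2 = Suc (Suc (2*n))" by simp
  have n0: "0 < 2*n" "0 < n" using assms(1) by auto
  have N0: "0 < Suc (Suc (2*n))" by simp
  obtain wp where wp: "detm (2*n) (cbasis_mat (2*n) Jp wp) > 0" using assms(3) by (auto simp: pos_compat_def)
  obtain wp' where wp': "detm (Suc (Suc (2*n))) (cbasis_mat (Suc (Suc (2*n))) Jp' wp') > 0"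
    using assms(5) by (auto simp: pos_compat_def eN)
  obtain wm where wm: "detm (2*n) (cbasis_mat (2*n) Jm wm) < 0" using assms(7) by (auto simp: neg_compat_def)
  obtain wm' where wm': "detm (Suc (Suc (2*n))) (cbasis_mat (Suc (Suc (2*n))) Jm' wm') < 0"
    using assms(9) by (auto simp: neg_compat_def eN)
  have Jp': "ocs (Suc (Suc (2*n))) Jp'" and Jm': "ocs (Suc (Suc (2*n))) Jm'"
    using assms(4,8) by (simp_all add: eN)
  have pp1: "pc (Suc (Suc (2*n))) (ext2 (2*n) (cbasis_mat (2*n) Jp wp) 1 0 0 1) (Idm (Suc (Suc (2*n))))"
    using pc_ext2[OF GLpos[OF wp]] by (simp add: ext2_Idm)
  have pp2: "pc (Suc (Suc (2*n))) (cbasis_mat (Suc (Suc (2*n))) Jp' wp') (Idm (Suc (Suc (2*n))))"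
    by (rule GLpos[OF wp'])
  have hp: "homotopic_with_canon (\<lambda>_. True) (Sph (Suc (Suc (2*n)))) (Qt (Suc n))
           (lam (Suc n) (ext2 (2*n) Jp 0 (-1) 1 0)) (lam (Suc n) Jp')"
    by (rule key_hom[OF assms(2) Jp' path_component_trans[OF pp1 path_component_sym[OF pp2]]])
  have H1: "homotopic_with_canon (\<lambda>_. True) (Sph (Suc (Suc (2*n)))) (Qt (Suc n))
           (iota n \<circ> sigma2 n (lam n Jp)) (lam (Suc n) Jp')"
    by (rule homotopic_with_eq[OF hp]) (simp_all add: comp_pos[unfolded comp_apply])
  have pm1: "pc (Suc (Suc (2*n))) (ext2 (2*n) (cbasis_mat (2*n) Jm wm) 1 0 0 1) (multr 0 (-1) (Idm (Suc (Suc (2*n)))))"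
    using pc_ext2[OF GLneg[OF wm n0(1)]] by (simp add: ext2_D[OF n0(1)])
  have pm2: "pc (Suc (Suc (2*n))) (cbasis_mat (Suc (Suc (2*n))) Jm' wm') (multr 0 (-1) (Idm (Suc (Suc (2*n)))))"
    by (rule GLneg[OF wm' N0])
  have hm: "homotopic_with_canon (\<lambda>_. True) (Sph (Suc (Suc (2*n)))) (Qt (Suc n))
           (lam (Suc n) (ext2 (2*n) Jm 0 (-1) 1 0)) (lam (Suc n) Jm')"
    by (rule key_hom[OF assms(6) Jm' path_component_trans[OF pm1 path_component_sym[OF pm2]]])
  have hm2: "homotopic_with_canon (\<lambda>_. True) (Sph (Suc (Suc (2*n)))) (Qt (Suc n))
           (lam (Suc n) (ext2 (2*n) Jm 0 (-1) 1 0) \<circ> refl0) (lam (Suc n) Jm' \<circ> refl0)"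
    by (rule homotopic_with_compose_continuous_right[OF hm cont_refl0]) (auto intro: refl0_Sph)
  have H2: "homotopic_with_canon (\<lambda>_. True) (Sph (Suc (Suc (2*n)))) (Qt (Suc n))
           (iota n \<circ> sigma2 n (lam n Jm \<circ> refl0)) (lam (Suc n) Jm' \<circ> refl0)"
  proof (rule homotopic_with_eq[OF hm2])
    fix x assume "x \<in> topspace (top_of_set (Sph (Suc (Suc (2*n)))))"
    then have x: "x \<in> Sph (Suc (Suc (2*n)))" by simp
    show "(iota n \<circ> sigma2 n (lam n Jm \<circ> refl0)) x = (lam (Suc n) (ext2 (2*n) Jm 0 (-1) 1 0) \<circ> refl0) x"
      by (rule comp_neg[OF x n0(2)])
  qed simp_all
  show ?thesis unfolding eN using H1 H2 by blast
qed


end
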